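(* In the setting of 2D Toom-Cook convolution described in the context, if every dot product in the linear transforms is computed by linear (recursive) summation of the rounded products, with arbitrary matrix entries, then $$|\hat S-S|\le |A^T|\big(|G|\,|H|\,|G^T|\odot|B^T|\,|X|\,|B|\big)|A|\,(2n_h+4n+7)\varepsilon+O(\varepsilon^2)$$ and $$\|\hat S-S\|_1\le \|A^T\|_1\|G\|_F\|H\|_F\|G^T\|_F\|B^T\|_F\|X\|_F\|B\|_F\|A\|_1\,(2n_h+4n+7)\varepsilon+O(\varepsilon^2).$$
   Context: $n=n_o+n_h-1$, $p_1,\dots,p_n$ distinct reals, $N_i=1/\prod_{j\ne i}(p_i-p_j)$, $M_{i,j}$ the coefficient of $a^{j-1}$ in $\prod_{k\ne i}(a-p_k)$; $A^T\in\mathbb{R}^{n_o\times n}$, $A^T_{i,j}=p_j^{i-1}$; $G\in\mathbb{R}^{n\times n_h}$, $G_{i,j}=p_i^{j-1}N_i$; $B^T\in\mathbb{R}^{n\times n}$, $B^T_{i,j}=M_{j,i}$. For $H\in F^{n_h\times n_h}$, $X\in F^{n\times n}$, $S=A^T(GHG^T\odot B^TXB)A$ is exact, and $\hat S$ is computed as $U=fl(fl(G)Hfl(G^T))$, $V=fl(fl(B^T)Xfl(B))$, $W_{ij}=fl(U_{ij}V_{ij})$, $\hat S=fl(fl(A^T)Wfl(A))$. Floating point model: unit roundoff $\varepsilon$, no overflow, each elementary operation and each stored constant incurs relative error at most $\varepsilon$. $\odot$ Hadamard product, $|\cdot|$ entrywise absolute value, $\|\cdot\|_1$ induced matrix 1-norm,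 $\|\cdot\|_F$ Frobenius norm. *)

theory Defs
  imports "HOL-Computational_Algebra.Polynomial" "Jordan_Normal_Form.Matrix"
begin

definition tc_n :: "nat \<Rightarrow> nat \<Rightarrow> nat" where
  "tc_n n_o n_h = n_o + n_h - 1"

definition tc_N :: "nat \<Rightarrow> (nat \<Rightarrow> real) \<Rightarrow> nat \<Rightarrow> real" where
  "tc_N n p i = 1 / (\<Prod>j\<in>{0..<n} - {i}. (p i - p j))"

definition tc_M :: "nat \<Rightarrow> (nat \<Rightarrow> real) \<Rightarrow> nat \<Rightarrow> nat \<Rightarrow> real" where
  "tc_M n p i j = coeff (\<Prod>k\<in>{0..<n} - {i}. [:- p k, 1:]) j"

definition tc_AT :: "nat \<Rightarrow> nat \<Rightarrow> (nat \<Rightarrow> real) \<Rightarrow> real mat" where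
  "tc_AT n_o n_h p = mat n_o (tc_n n_o n_h) (\<lambda>(i,j). p j ^ i)"

definition tc_G :: "nat \<Rightarrow> nat \<Rightarrow> (nat \<Rightarrow> real) \<Rightarrow> real mat" where
  "tc_G n_o n_h p = mat (tc_n n_o n_h) n_h
     (\<lambda>(i,j). p i ^ j * tc_N (tc_n n_o n_h) p i)"

definition tc_BT :: "nat \<Rightarrow> nat \<Rightarrow> (nat \<Rightarrow> real) \<Rightarrow> real mat" where
  "tc_BT n_o n_h p = mat (tc_n n_o n_h) (tc_n n_o n_h)
     (\<lambda>(i,j). tc_M (tc_n n_o n_h) p j i)"

definition hadamard :: "real mat \<Rightarrow> real mat \<Rightarrow> real mat" where
  "hadamard P Q = mat (dim_row P) (dim_col P) (\<lambda>(i,j). P $$ (i,j) * Q $$ (i,j))"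

definition abs_mat :: "real mat \<Rightarrow> real mat" where
  "abs_mat P = map_mat abs P"

definition tc_S :: "nat \<Rightarrow> nat \<Rightarrow> (nat \<Rightarrow> real) \<Rightarrow> real mat \<Rightarrow> real mat \<Rightarrow> real mat" where
  "tc_S n_o n_h p H X =
     (let AT = tc_AT n_o n_h p; G = tc_G n_o n_h p; BT = tc_BT n_o n_h p
      in AT * hadamard (G * H * transpose_mat G) (BT * X * transpose_mat BT) * transpose_mat AT)"

(* Each operation carries a relative error: alpha k for the k-th product,
   beta k for the addition that incorporates the k-th product. *)
fun lin_dot :: "(nat \<Rightarrow> real) \<Rightarrow> (nat \<Rightarrow> real) \<Rightarrow> (nat \<Rightarrow> real) \<Rightarrow> (nat \<Rightarrow> real) \<Rightarrow> nat \<Rightarrow> real" where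
  "lin_dot \<alpha> \<beta> x y 0 = 0"
| "lin_dot \<alpha> \<beta> x y (Suc k) =
     (if k = 0 then x 0 * y 0 * (1 + \<alpha> 0)
      else (lin_dot \<alpha> \<beta> x y k + x k * y k * (1 + \<alpha> k)) * (1 + \<beta> k))"

definition fl_mult :: "(nat \<Rightarrow> nat \<Rightarrow> nat \<Rightarrow> real) \<Rightarrow> (nat \<Rightarrow> nat \<Rightarrow> nat \<Rightarrow> real)
    \<Rightarrow> real mat \<Rightarrow> real mat \<Rightarrow> real mat" where
  "fl_mult da ds P Q = mat (dim_row P) (dim_col Q)
     (\<lambda>(i,j). lin_dot (da i j) (ds i j) (\<lambda>k. P $$ (i,k)) (\<lambda>k. Q $$ (k,j)) (dim_col P))"

(* storing a matrix of (real) constants: each entry gets a relative error *)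
definition fl_store :: "(nat \<Rightarrow> nat \<Rightarrow> real) \<Rightarrow> real mat \<Rightarrow> real mat" where
  "fl_store d P = mat (dim_row P) (dim_col P) (\<lambda>(i,j). P $$ (i,j) * (1 + d i j))"

definition fl_hadamard :: "(nat \<Rightarrow> nat \<Rightarrow> real) \<Rightarrow> real mat \<Rightarrow> real mat \<Rightarrow> real mat" where
  "fl_hadamard d P Q = mat (dim_row P) (dim_col P)
     (\<lambda>(i,j). P $$ (i,j) * Q $$ (i,j) * (1 + d i j))"

(* The computed \<hat>S.  e t i j k is the relative rounding error of the operation with
   tag t (which rounding / product), entry (i,j) and position k. *)
definition tc_Shat :: "nat \<Rightarrow> nat \<Rightarrow> (nat \<Rightarrow> real) \<Rightarrow> real mat \<Rightarrow> real mat
    \<Rightarrow> (nat \<Rightarrow> nat \<Rightarrow> nat \<Rightarrow> nat \<Rightarrow> real) \<Rightarrow> real mat" where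
  "tc_Shat n_o n_h p H X e =
     (let AT = tc_AT n_o n_h p; G = tc_G n_o n_h p; BT = tc_BT n_o n_h p;
          st = (\<lambda>t. (\<lambda>i j. e t i j 0));
          U = fl_mult (e 4) (e 5)
                (fl_mult (e 2) (e 3) (fl_store (st 0) G) H)
                (fl_store (st 1) (transpose_mat G));
          V = fl_mult (e 10) (e 11)
                (fl_mult (e 8) (e 9) (fl_store (st 6) BT) X)
                (fl_store (st 7) (transpose_mat BT));
          W = fl_hadamard (st 12) U V
      in fl_mult (e 17) (e 18)
           (fl_mult (e 15) (e 16) (fl_store (st 13) AT) W)
           (fl_store (st 14) (transpose_mat AT)))"

definition vec_norm1 :: "real vec \<Rightarrow> real" where
  "vec_norm1 x = (\<Sum>i<dim_vec x. \<bar>x $ i\<bar>)"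

definition mat_norm1 :: "real mat \<Rightarrow> real" where
  "mat_norm1 P = Sup {vec_norm1 (P *\<^sub>v x) | x. x \<in> carrier_vec (dim_col P) \<and> vec_norm1 x \<le> 1}"

definition frob :: "real mat \<Rightarrow> real" where
  "frob P = sqrt (\<Sum>i<dim_row P. \<Sum>j<dim_col P. (P $$ (i,j))\<^sup>2)"

end

theory Submission
  imports Defs
begin



definition ok :: "real \<Rightarrow> nat \<Rightarrow> real \<Rightarrow> real \<Rightarrow> real \<Rightarrow> bool" where
  "ok \<epsilon> m y x s \<longleftrightarrow> \<bar>x\<bar> \<le> s \<and> \<bar>y - x\<bar> \<le> s * ((1+\<epsilon>)^m - 1)"

lemma tri3: "y = u+v+w \<Longrightarrow> \<bar>y::real\<bar> \<le> \<bar>u\<bar>+\<bar>v\<bar>+\<bar>w\<bar>" by linarith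
lemma tri2: "y = u+v \<Longrightarrow> \<bar>y::real\<bar> \<le> \<bar>u\<bar>+\<bar>v\<bar>" by linarith

lemma ok_mono: assumes "0 \<le> \<epsilon>" "ok \<epsilon> m y x s" "m \<le> m'" shows "ok \<epsilon> m' y x s"
proof -
  have s: "0 \<le> s" using assms(2) unfolding ok_def by linarith
  have "(1+\<epsilon>)^m \<le> (1+\<epsilon>)^m'" using assms by (intro power_increasing) auto
  hence "s * ((1+\<epsilon>)^m - 1) \<le> s * ((1+\<epsilon>)^m' - 1)" using s by (intro mult_left_mono) auto
  thus ?thesis using assms(2) unfolding ok_def by linarith
qed

lemma ok_mult: assumes "0 \<le> \<epsilon>" "ok \<epsilon> a y1 x1 s1" "ok \<epsilon> b y2 x2 s2"
  shows "ok \<epsilon> (a+b) (y1*y2) (x1*x2) (s1*s2)"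
proof -
  define da where "da = (1+\<epsilon>)^a - 1"
  define db where "db = (1+\<epsilon>)^b - 1"
  have da: "0 \<le> da" "0 \<le> db" unfolding da_def db_def using assms(1) by (auto simp: one_le_power)
  define e1 where "e1 = y1 - x1"
  define e2 where "e2 = y2 - x2"
  have h: "\<bar>x1\<bar> \<le> s1" "\<bar>e1\<bar> \<le> s1*da" "\<bar>x2\<bar> \<le> s2" "\<bar>e2\<bar> \<le> s2*db"
    using assms(2,3) unfolding ok_def da_def db_def e1_def e2_def by auto
  have "y1*y2 - x1*x2 = x1*e2 + e1*x2 + e1*e2" unfolding e1_def e2_def by (simp add: algebra_simps)
  hence "\<bar>y1*y2 - x1*x2\<bar> \<le> \<bar>x1\<bar>*\<bar>e2\<bar> + \<bar>e1\<bar>*\<bar>x2\<bar> + \<bar>e1\<bar>*\<bar>e2\<bar>"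
    unfolding abs_mult[symmetric] by (rule tri3)
  also have "\<dots> \<le> s1*(s2*db) + (s1*da)*s2 + (s1*da)*(s2*db)"
    by (intro add_mono mult_mono) (use h in auto)
  also have "\<dots> = (s1*s2)*((1+da)*(1+db) - 1)" by (simp add: algebra_simps)
  also have "(1+da)*(1+db) = (1+\<epsilon>)^(a+b)" unfolding da_def db_def by (simp add: power_add)
  finally have "\<bar>y1*y2 - x1*x2\<bar> \<le> (s1*s2)*((1+\<epsilon>)^(a+b) - 1)" .
  moreover have "\<bar>x1*x2\<bar> \<le> s1*s2" unfolding abs_mult
    by (intro mult_mono) (use h in auto)
  ultimately show ?thesis unfolding ok_def by blast
qed

lemma ok_add: assumes "ok \<epsilon> m y1 x1 s1" "ok \<epsilon> m y2 x2 s2"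
  shows "ok \<epsilon> m (y1+y2) (x1+x2) (s1+s2)"
proof -
  have "\<bar>(y1+y2) - (x1+x2)\<bar> \<le> \<bar>y1-x1\<bar> + \<bar>y2-x2\<bar>" by linarith
  moreover have "\<bar>x1+x2\<bar> \<le> \<bar>x1\<bar> + \<bar>x2\<bar>" by linarith
  ultimately show ?thesis using assms unfolding ok_def distrib_right by linarith
qed

lemma ok_round: assumes "0 \<le> \<epsilon>" "\<bar>\<beta>\<bar> \<le> \<epsilon>" "ok \<epsilon> m y x s"
  shows "ok \<epsilon> (Suc m) (y*(1+\<beta>)) x s"
proof -
  define d where "d = (1+\<epsilon>)^m - 1"
  have d: "0 \<le> d" unfolding d_def using assms(1) by (auto simp: one_le_power)
  have h: "\<bar>x\<bar> \<le> s" "\<bar>y - x\<bar> \<le> s*d" using assms(3) unfolding ok_def d_def by auto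
  have "y*(1+\<beta>) - x = (y-x)*(1+\<beta>) + x*\<beta>" by (simp add: algebra_simps)
  hence "\<bar>y*(1+\<beta>) - x\<bar> \<le> \<bar>y-x\<bar>*\<bar>1+\<beta>\<bar> + \<bar>x\<bar>*\<bar>\<beta>\<bar>"
    unfolding abs_mult[symmetric] by (rule tri2)
  also have "\<dots> \<le> (s*d)*(1+\<epsilon>) + s*\<epsilon>"
    by (intro add_mono mult_mono) (use h assms in auto)
  also have "\<dots> = s*((1+d)*(1+\<epsilon>) - 1)" by (simp add: algebra_simps)
  also have "(1+d)*(1+\<epsilon>) = (1+\<epsilon>)^(Suc m)" unfolding d_def by simp
  finally show ?thesis using h unfolding ok_def by auto
qed

lemma ok_exact: "ok \<epsilon> 0 x x \<bar>x\<bar>" unfolding ok_def by auto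
lemma ok_zero: "ok \<epsilon> m 0 0 0" unfolding ok_def by auto

lemma ok_lin_dot:
  assumes e: "0 \<le> \<epsilon>" and ab: "\<And>k. \<bar>\<alpha> k\<bar> \<le> \<epsilon>" "\<And>k. \<bar>\<beta> k\<bar> \<le> \<epsilon>"
    and hx: "\<And>k. k < r \<Longrightarrow> ok \<epsilon> a (xh k) (x k) (sx k)"
    and hy: "\<And>k. k < r \<Longrightarrow> ok \<epsilon> b (yh k) (y k) (sy k)"
  shows "k \<le> r \<Longrightarrow> ok \<epsilon> (a+b+k) (lin_dot \<alpha> \<beta> xh yh k) (\<Sum>l<k. x l * y l) (\<Sum>l<k. sx l * sy l)"
proof (induction k)
  case 0 then show ?case by (simp add: ok_zero)
next
  case (Suc k)
  have km: "k < r" using Suc by auto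
  have t: "ok \<epsilon> (a+b) (xh k * yh k) (x k * y k) (sx k * sy k)"
    using ok_mult[OF e hx[OF km] hy[OF km]] .
  have t1: "ok \<epsilon> (Suc (a+b)) (xh k * yh k * (1 + \<alpha> k)) (x k * y k) (sx k * sy k)"
    by (rule ok_round[OF e ab(1) t])
  show ?case
  proof (cases "k = 0")
    case True then show ?thesis using t1 by simp
  next
    case False
    have L: "ok \<epsilon> (a+b+k) (lin_dot \<alpha> \<beta> xh yh k) (\<Sum>l<k. x l * y l) (\<Sum>l<k. sx l * sy l)"
      using Suc km by auto
    have t2: "ok \<epsilon> (a+b+k) (xh k * yh k * (1 + \<alpha> k)) (x k * y k) (sx k * sy k)"
      by (rule ok_mono[OF e t1]) (use False in auto)
    have "ok \<epsilon> (Suc (a+b+k)) ((lin_dot \<alpha> \<beta> xh yh k + xh k * yh k * (1 + \<alpha> k)) * (1 + \<beta> k))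
        ((\<Sum>l<k. x l * y l) + x k * y k) ((\<Sum>l<k. sx l * sy l) + sx k * sy k)"
      by (rule ok_round[OF e ab(2) ok_add[OF L t2]])
    then show ?thesis using False by simp
  qed
qed




lemma mult_entry: "i < dim_row A \<Longrightarrow> j < dim_col B \<Longrightarrow> dim_col A = dim_row B \<Longrightarrow>
  (A*B)$$(i,j) = (\<Sum>k<dim_col A. A$$(i,k)*B$$(k,j))"
  by (simp add: scalar_prod_def atLeast0LessThan)

definition mok :: "real \<Rightarrow> nat \<Rightarrow> real mat \<Rightarrow> real mat \<Rightarrow> real mat \<Rightarrow> bool" where
  "mok \<epsilon> m Yh Y S \<longleftrightarrow> dim_row Yh = dim_row Y \<and> dim_col Yh = dim_col Y \<and>
     dim_row S = dim_row Y \<and> dim_col S = dim_col Y \<and>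
     (\<forall>i<dim_row Y. \<forall>j<dim_col Y. ok \<epsilon> m (Yh$$(i,j)) (Y$$(i,j)) (S$$(i,j)))"

lemma mok_exact: "mok \<epsilon> 0 Y Y (abs_mat Y)"
  unfolding mok_def abs_mat_def by (auto simp: ok_exact)

lemma mok_store: assumes "0 \<le> \<epsilon>" "\<And>i j. \<bar>d i j\<bar> \<le> \<epsilon>"
  shows "mok \<epsilon> 1 (fl_store d Y) Y (abs_mat Y)"
  unfolding mok_def abs_mat_def fl_store_def
  using ok_round[OF assms(1) assms(2) ok_exact] by auto

lemma mok_mult: assumes e: "0 \<le> \<epsilon>" and ab: "\<And>i j k. \<bar>da i j k\<bar> \<le> \<epsilon>" "\<And>i j k. \<bar>ds i j k\<bar> \<le> \<epsilon>"
  and P: "mok \<epsilon> a Ph P SP" and Q: "mok \<epsilon> b Qh Q SQ" and d: "dim_col P = dim_row Q"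
  shows "mok \<epsilon> (a+b+dim_col P) (fl_mult da ds Ph Qh) (P*Q) (SP*SQ)"
  unfolding mok_def
proof (intro conjI allI impI)
  fix i j assume i: "i < dim_row (P*Q)" and j: "j < dim_col (P*Q)"
  have dims: "dim_row Ph = dim_row P" "dim_col Ph = dim_col P" "dim_row SP = dim_row P" "dim_col SP = dim_col P"
     "dim_row Qh = dim_row Q" "dim_col Qh = dim_col Q" "dim_row SQ = dim_row Q" "dim_col SQ = dim_col Q"
    using P Q unfolding mok_def by auto
  have i': "i < dim_row P" and j': "j < dim_col Q" using i j by auto
  have hx: "\<And>k. k < dim_col P \<Longrightarrow> ok \<epsilon> a (Ph$$(i,k)) (P$$(i,k)) (SP$$(i,k))"
    using P i' unfolding mok_def by auto
  have hy: "\<And>k. k < dim_col P \<Longrightarrow> ok \<epsilon> b (Qh$$(k,j)) (Q$$(k,j)) (SQ$$(k,j))"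
    using Q j' d unfolding mok_def by auto
  have "ok \<epsilon> (a+b+dim_col P) (lin_dot (da i j) (ds i j) (\<lambda>k. Ph$$(i,k)) (\<lambda>k. Qh$$(k,j)) (dim_col P))
     (\<Sum>l<dim_col P. P$$(i,l) * Q$$(l,j)) (\<Sum>l<dim_col P. SP$$(i,l) * SQ$$(l,j))"
    by (rule ok_lin_dot[OF e ab(1) ab(2) hx hy]) auto
  moreover have "(P*Q)$$(i,j) = (\<Sum>l<dim_col P. P$$(i,l) * Q$$(l,j))"
    using mult_entry[OF i' j' d] .
  moreover have "(SP*SQ)$$(i,j) = (\<Sum>l<dim_col P. SP$$(i,l) * SQ$$(l,j))"
    using mult_entry[of i SP j SQ] i' j' d dims by simp
  moreover have "fl_mult da ds Ph Qh $$ (i,j) = lin_dot (da i j) (ds i j) (\<lambda>k. Ph$$(i,k)) (\<lambda>k. Qh$$(k,j)) (dim_col P)"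
    unfolding fl_mult_def using i' j' dims by simp
  ultimately show "ok \<epsilon> (a + b + dim_col P) (fl_mult da ds Ph Qh $$ (i, j)) ((P * Q) $$ (i, j)) ((SP * SQ) $$ (i, j))"
    by simp
qed (use P Q in \<open>auto simp: mok_def fl_mult_def\<close>)

lemma mok_had: assumes e: "0 \<le> \<epsilon>" and dd: "\<And>i j. \<bar>d i j\<bar> \<le> \<epsilon>"
  and P: "mok \<epsilon> a Ph P SP" and Q: "mok \<epsilon> b Qh Q SQ" and d: "dim_row P = dim_row Q" "dim_col P = dim_col Q"
  shows "mok \<epsilon> (Suc (a+b)) (fl_hadamard d Ph Qh) (hadamard P Q) (hadamard SP SQ)"
  unfolding mok_def
proof (intro conjI allI impI)
  fix i j assume i: "i < dim_row (hadamard P Q)" and j: "j < dim_col (hadamard P Q)"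
  have dims: "dim_row Ph = dim_row P" "dim_col Ph = dim_col P" "dim_row SP = dim_row P" "dim_col SP = dim_col P"
     "dim_row Qh = dim_row Q" "dim_col Qh = dim_col Q" "dim_row SQ = dim_row Q" "dim_col SQ = dim_col Q"
    using P Q unfolding mok_def by auto
  have i': "i < dim_row P" and j': "j < dim_col P" using i j by (auto simp: hadamard_def)
  have "ok \<epsilon> (a+b) (Ph$$(i,j) * Qh$$(i,j)) (P$$(i,j) * Q$$(i,j)) (SP$$(i,j) * SQ$$(i,j))"
    by (rule ok_mult[OF e]) (use P Q i' j' d in \<open>auto simp: mok_def\<close>)
  from ok_round[OF e dd this]
  show "ok \<epsilon> (Suc (a + b)) (fl_hadamard d Ph Qh $$ (i, j)) (hadamard P Q $$ (i, j)) (hadamard SP SQ $$ (i, j))"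
    using i' j' dims d by (simp add: fl_hadamard_def hadamard_def)
qed (use P Q in \<open>auto simp: mok_def fl_hadamard_def hadamard_def\<close>)




lemma pow_bound: assumes "0 \<le> (\<epsilon>::real)" "\<epsilon> \<le> 1"
  shows "(1+\<epsilon>)^N \<le> 1 + real N * \<epsilon> + 4^N * \<epsilon>^2"
proof (induction N)
  case 0 then show ?case by simp
next
  case (Suc N)
  have N4: "real N \<le> 4^N"
  proof -
    have "N < 2^N" by (rule less_exp)
    also have "(2::nat)^N \<le> 4^N" by (rule power_mono) auto
    finally show ?thesis by (metis less_imp_le of_nat_le_iff of_nat_numeral of_nat_power)
  qed
  have e2: "0 \<le> \<epsilon>^2" by simp
  have e3: "\<epsilon>^3 \<le> \<epsilon>^2" using assms by (simp add: power_decreasing)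
  have "(1+\<epsilon>)^Suc N = (1+\<epsilon>)*(1+\<epsilon>)^N" by simp
  also have "\<dots> \<le> (1+\<epsilon>)*(1 + real N * \<epsilon> + 4^N * \<epsilon>^2)"
    using Suc assms by (intro mult_left_mono) auto
  also have "\<dots> = 1 + real (Suc N) * \<epsilon> + (real N * \<epsilon>^2 + 4^N * \<epsilon>^2 + 4^N * \<epsilon>^3)"
    by (simp add: algebra_simps power2_eq_square power3_eq_cube)
  also have "real N * \<epsilon>^2 + 4^N * \<epsilon>^2 + 4^N * \<epsilon>^3 \<le> 4^N * \<epsilon>^2 + 4^N * \<epsilon>^2 + 4^N * \<epsilon>^2"
    by (intro add_mono mult_right_mono mult_left_mono N4 e3 e2) auto
  also have "\<dots> \<le> 4^Suc N * \<epsilon>^2" by simp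
  finally show ?case by simp
qed

lemma mat_norm1_set_bound:
  assumes M: "0 \<le> M" and cs: "\<And>j. j < dim_col P \<Longrightarrow> (\<Sum>i<dim_row P. \<bar>P$$(i,j)\<bar>) \<le> M"
    and x: "x \<in> carrier_vec (dim_col P)" "vec_norm1 x \<le> 1"
  shows "vec_norm1 (P *\<^sub>v x) \<le> M"
proof -
  have dx: "dim_vec x = dim_col P" using x by auto
  have "vec_norm1 (P *\<^sub>v x) = (\<Sum>i<dim_row P. \<bar>\<Sum>k<dim_col P. P$$(i,k) * x$k\<bar>)"
    unfolding vec_norm1_def using dx by (simp add: scalar_prod_def atLeast0LessThan)
  also have "\<dots> \<le> (\<Sum>i<dim_row P. \<Sum>k<dim_col P. \<bar>P$$(i,k)\<bar> * \<bar>x$k\<bar>)"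
    by (intro sum_mono) (metis (no_types, lifting) abs_mult sum_abs sum.cong)
  also have "\<dots> = (\<Sum>k<dim_col P. (\<Sum>i<dim_row P. \<bar>P$$(i,k)\<bar>) * \<bar>x$k\<bar>)"
    by (subst sum.swap) (simp add: sum_distrib_right)
  also have "\<dots> \<le> (\<Sum>k<dim_col P. M * \<bar>x$k\<bar>)"
    by (intro sum_mono mult_right_mono cs) auto
  also have "\<dots> = M * vec_norm1 x" unfolding vec_norm1_def dx by (simp add: sum_distrib_left)
  also have "\<dots> \<le> M" using M x(2) by (simp add: mult_left_le)
  finally show ?thesis .
qed

lemma mat_norm1_le:
  assumes M: "0 \<le> M" and cs: "\<And>j. j < dim_col P \<Longrightarrow> (\<Sum>i<dim_row P. \<bar>P$$(i,j)\<bar>) \<le> M"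
  shows "mat_norm1 P \<le> M"
  unfolding mat_norm1_def
proof (rule cSup_least)
  have "vec_norm1 (0\<^sub>v (dim_col P)) = 0" unfolding vec_norm1_def by simp
  hence "0\<^sub>v (dim_col P) \<in> carrier_vec (dim_col P) \<and> vec_norm1 (0\<^sub>v (dim_col P)) \<le> 1" by simp
  thus "{vec_norm1 (P *\<^sub>v x) |x. x \<in> carrier_vec (dim_col P) \<and> vec_norm1 x \<le> 1} \<noteq> {}" by blast
qed (use mat_norm1_set_bound[OF M cs] in auto)

lemma mat_norm1_ge:
  assumes j: "j < dim_col P"
  shows "(\<Sum>i<dim_row P. \<bar>P$$(i,j)\<bar>) \<le> mat_norm1 P"
  unfolding mat_norm1_def
proof (rule cSup_upper)
  let ?u = "unit_vec (dim_col P) j :: real vec"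
  have u: "?u \<in> carrier_vec (dim_col P)" by simp
  have "vec_norm1 ?u = (\<Sum>k<dim_col P. if k = j then 1 else 0)"
    unfolding vec_norm1_def by (intro sum.cong) (use j in auto)
  also have "\<dots> = 1" using j by simp
  finally have n: "vec_norm1 ?u \<le> 1" by simp
  have "vec_norm1 (P *\<^sub>v ?u) = (\<Sum>i<dim_row P. \<bar>P$$(i,j)\<bar>)"
    unfolding vec_norm1_def dim_mult_mat_vec
  proof (intro sum.cong refl)
    fix i assume i: "i \<in> {..<dim_row P}"
    have "row P i \<bullet> ?u = (\<Sum>k\<in>{0..<dim_col P}. P$$(i,k) * (if k = j then 1 else 0))"
      unfolding scalar_prod_def using i j by (intro sum.cong) auto
    also have "\<dots> = P$$(i,j)" using j by (simp add: if_distrib cong: if_cong)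
    finally show "\<bar>(P *\<^sub>v ?u) $ i\<bar> = \<bar>P $$ (i, j)\<bar>" using i by simp
  qed
  thus "(\<Sum>i<dim_row P. \<bar>P$$(i,j)\<bar>) \<in> {vec_norm1 (P *\<^sub>v x) |x. x \<in> carrier_vec (dim_col P) \<and> vec_norm1 x \<le> 1}"
    using u n by (metis (mono_tags, lifting) mem_Collect_eq)
  show "bdd_above {vec_norm1 (P *\<^sub>v x) |x. x \<in> carrier_vec (dim_col P) \<and> vec_norm1 x \<le> 1}"
  proof (rule bdd_aboveI)
    fix y assume "y \<in> {vec_norm1 (P *\<^sub>v x) |x. x \<in> carrier_vec (dim_col P) \<and> vec_norm1 x \<le> 1}"
    then obtain x where x: "x \<in> carrier_vec (dim_col P)" "vec_norm1 x \<le> 1" and y: "y = vec_norm1 (P *\<^sub>v x)" by blast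
    show "y \<le> (\<Sum>j<dim_col P. \<Sum>i<dim_row P. \<bar>P$$(i,j)\<bar>)"
      unfolding y
    proof (rule mat_norm1_set_bound[OF _ _ x])
      show "0 \<le> (\<Sum>j<dim_col P. \<Sum>i<dim_row P. \<bar>P$$(i,j)\<bar>)" by (intro sum_nonneg) auto
      fix j' assume "j' < dim_col P"
      thus "(\<Sum>i<dim_row P. \<bar>P$$(i,j')\<bar>) \<le> (\<Sum>j<dim_col P. \<Sum>i<dim_row P. \<bar>P$$(i,j)\<bar>)"
        by (intro member_le_sum[where f="\<lambda>j. \<Sum>i<dim_row P. \<bar>P$$(i,j)\<bar>"]) (auto intro: sum_nonneg)
    qed
  qed
qed




lemma cs_sq: fixes a b :: "nat \<Rightarrow> real" assumes "finite I"
  shows "(\<Sum>i\<in>I. a i * b i)^2 \<le> (\<Sum>i\<in>I. (a i)^2) * (\<Sum>i\<in>I. (b i)^2)"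
proof -
  have t: "\<And>i j. (a i * b j - a j * b i)^2 = (a i)^2 * (b j)^2 + (b i)^2 * (a j)^2 - 2 * ((a i * b i) * (a j * b j))"
    by (simp add: power2_eq_square algebra_simps)
  have s1: "(\<Sum>i\<in>I. \<Sum>j\<in>I. (a i)^2 * (b j)^2) = (\<Sum>i\<in>I. (a i)^2) * (\<Sum>i\<in>I. (b i)^2)"
    by (simp add: sum_product)
  have s2: "(\<Sum>i\<in>I. \<Sum>j\<in>I. (b i)^2 * (a j)^2) = (\<Sum>i\<in>I. (a i)^2) * (\<Sum>i\<in>I. (b i)^2)"
    by (subst sum.swap) (simp add: s1[symmetric] mult.commute)
  have s3: "(\<Sum>i\<in>I. \<Sum>j\<in>I. 2 * ((a i * b i) * (a j * b j))) = 2 * (\<Sum>i\<in>I. a i * b i)^2"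
  proof -
    have "(\<Sum>i\<in>I. a i * b i)^2 = (\<Sum>i\<in>I. \<Sum>j\<in>I. (a i * b i) * (a j * b j))"
      by (simp only: power2_eq_square sum_product)
    thus ?thesis by (simp add: sum_distrib_left)
  qed
  have "0 \<le> (\<Sum>i\<in>I. \<Sum>j\<in>I. (a i * b j - a j * b i)^2)" by (intro sum_nonneg) auto
  also have "\<dots> = (\<Sum>i\<in>I. \<Sum>j\<in>I. (a i)^2 * (b j)^2) + (\<Sum>i\<in>I. \<Sum>j\<in>I. (b i)^2 * (a j)^2)
      - (\<Sum>i\<in>I. \<Sum>j\<in>I. 2 * ((a i * b i) * (a j * b j)))"
    unfolding t by (simp add: sum.distrib sum_subtractf)
  finally show ?thesis unfolding s1 s2 s3 by simp
qed

lemma cs_sqrt: fixes a b :: "nat \<Rightarrow> real" assumes "finite I"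
  shows "(\<Sum>i\<in>I. a i * b i) \<le> sqrt (\<Sum>i\<in>I. (a i)^2) * sqrt (\<Sum>i\<in>I. (b i)^2)"
proof -
  have "(\<Sum>i\<in>I. a i * b i) \<le> sqrt ((\<Sum>i\<in>I. a i * b i)^2)" by simp
  also have "\<dots> \<le> sqrt ((\<Sum>i\<in>I. (a i)^2) * (\<Sum>i\<in>I. (b i)^2))"
    using cs_sq[OF assms] by (rule real_sqrt_le_mono)
  finally show ?thesis by (simp add: real_sqrt_mult)
qed

lemma frob_nonneg: "0 \<le> frob P" unfolding frob_def by (intro real_sqrt_ge_zero sum_nonneg) auto

lemma frob_abs: "frob (abs_mat P) = frob P"
  unfolding frob_def abs_mat_def by (simp)

lemma frob_mult: assumes "dim_col P = dim_row Q" shows "frob (P*Q) \<le> frob P * frob Q"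
proof -
  have "(\<Sum>i<dim_row (P*Q). \<Sum>j<dim_col (P*Q). ((P*Q)$$(i,j))^2)
     \<le> (\<Sum>i<dim_row P. \<Sum>j<dim_col Q. (\<Sum>k<dim_col P. (P$$(i,k))^2) * (\<Sum>k<dim_col P. (Q$$(k,j))^2))"
    unfolding index_mult_mat(2,3)
  proof (intro sum_mono)
    fix i j assume i: "i \<in> {..<dim_row P}" and j: "j \<in> {..<dim_col Q}"
    have "(P*Q)$$(i,j) = (\<Sum>k<dim_col P. P$$(i,k)*Q$$(k,j))"
      by (rule mult_entry) (use i j assms in auto)
    thus "((P*Q)$$(i,j))^2 \<le> (\<Sum>k<dim_col P. (P$$(i,k))^2) * (\<Sum>k<dim_col P. (Q$$(k,j))^2)"
      by (simp add: cs_sq)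
  qed
  also have "\<dots> = (\<Sum>i<dim_row P. \<Sum>k<dim_col P. (P$$(i,k))^2) * (\<Sum>j<dim_col Q. \<Sum>k<dim_col P. (Q$$(k,j))^2)"
    by (simp add: sum_product)
  also have "\<dots> = (\<Sum>i<dim_row P. \<Sum>k<dim_col P. (P$$(i,k))^2) * (\<Sum>k<dim_row Q. \<Sum>j<dim_col Q. (Q$$(k,j))^2)"
    using assms by (simp add: sum.swap[of _ "{..<dim_col Q}"])
  finally show ?thesis unfolding frob_def by (simp add: real_sqrt_mult[symmetric])
qed

lemma had_colsum: assumes "dim_row P = dim_row Q" "dim_col P = dim_col Q" "l < dim_col P"
  shows "(\<Sum>k<dim_row P. P$$(k,l) * Q$$(k,l)) \<le> frob P * frob Q"
proof -
  have r: "(\<Sum>k<dim_row R. (R$$(k,l))^2) \<le> (\<Sum>k<dim_row R. \<Sum>j<dim_col R. (R$$(k,j))^2)"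
    if "dim_col R = dim_col P" for R :: "real mat"
  proof (rule sum_mono)
    fix k assume "k \<in> {..<dim_row R}"
    show "(R$$(k,l))^2 \<le> (\<Sum>j<dim_col R. (R$$(k,j))^2)"
      using member_le_sum[of l "{..<dim_col R}" "\<lambda>j. (R$$(k,j))^2"] that assms(3) by auto
  qed
  have "(\<Sum>k<dim_row P. P$$(k,l) * Q$$(k,l)) \<le> sqrt (\<Sum>k<dim_row P. (P$$(k,l))^2) * sqrt (\<Sum>k<dim_row P. (Q$$(k,l))^2)"
    by (rule cs_sqrt) auto
  also have "\<dots> \<le> frob P * frob Q" unfolding frob_def
  proof (intro mult_mono real_sqrt_le_mono)
    show "(\<Sum>k<dim_row P. (P$$(k,l))^2) \<le> (\<Sum>k<dim_row P. \<Sum>j<dim_col P. (P$$(k,j))^2)" using r[of P] by simp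
    show "(\<Sum>k<dim_row P. (Q$$(k,l))^2) \<le> (\<Sum>k<dim_row Q. \<Sum>j<dim_col Q. (Q$$(k,j))^2)" using r[of Q] assms by simp
  qed (auto intro!: sum_nonneg)
  finally show ?thesis .
qed

lemma D_colsum:
  assumes A1: "A1 \<in> carrier_mat r n" and M: "M \<in> carrier_mat n n" and A2: "A2 \<in> carrier_mat n r'"
    and Mnn: "\<And>k l. k < n \<Longrightarrow> l < n \<Longrightarrow> 0 \<le> M$$(k,l)"
    and a: "\<And>k. k < n \<Longrightarrow> (\<Sum>i<r. \<bar>A1$$(i,k)\<bar>) \<le> \<alpha>"
    and f: "\<And>l. l < n \<Longrightarrow> (\<Sum>k<n. M$$(k,l)) \<le> F"
    and b: "(\<Sum>l<n. \<bar>A2$$(l,j)\<bar>) \<le> \<beta>"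
    and pos: "0 \<le> \<alpha>" "0 \<le> F" and j: "j < r'"
  shows "(\<Sum>i<r. (abs_mat A1 * M * abs_mat A2)$$(i,j)) \<le> \<alpha> * F * \<beta>"
proof -
  have e: "\<And>i. i < r \<Longrightarrow> (abs_mat A1 * M * abs_mat A2)$$(i,j) =
       (\<Sum>l<n. (\<Sum>k<n. \<bar>A1$$(i,k)\<bar> * M$$(k,l)) * \<bar>A2$$(l,j)\<bar>)"
  proof -
    fix i assume i: "i < r"
    have "(abs_mat A1 * M * abs_mat A2)$$(i,j) = (\<Sum>l<n. (abs_mat A1 * M)$$(i,l) * abs_mat A2$$(l,j))"
      by (subst mult_entry) (use A1 M A2 i j in \<open>auto simp: abs_mat_def\<close>)
    also have "\<dots> = (\<Sum>l<n. (\<Sum>k<n. \<bar>A1$$(i,k)\<bar> * M$$(k,l)) * \<bar>A2$$(l,j)\<bar>)"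
    proof (rule sum.cong[OF refl])
      fix l assume l: "l \<in> {..<n}"
      have "(abs_mat A1 * M)$$(i,l) = (\<Sum>k<n. abs_mat A1$$(i,k) * M$$(k,l))"
        by (subst mult_entry) (use A1 M A2 i l in \<open>auto simp: abs_mat_def\<close>)
      also have "\<dots> = (\<Sum>k<n. \<bar>A1$$(i,k)\<bar> * M$$(k,l))"
        by (rule sum.cong) (use A1 i in \<open>auto simp: abs_mat_def\<close>)
      finally show "(abs_mat A1 * M)$$(i,l) * abs_mat A2$$(l,j) = (\<Sum>k<n. \<bar>A1$$(i,k)\<bar> * M$$(k,l)) * \<bar>A2$$(l,j)\<bar>"
        using A2 l j by (simp add: abs_mat_def)
    qed
    finally show "?thesis i" .
  qed
  have "(\<Sum>i<r. (abs_mat A1 * M * abs_mat A2)$$(i,j)) =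
      (\<Sum>l<n. (\<Sum>k<n. (\<Sum>i<r. \<bar>A1$$(i,k)\<bar>) * M$$(k,l)) * \<bar>A2$$(l,j)\<bar>)"
    using e by (simp add: sum_distrib_right sum.swap[of _ "{..<r}"])
  also have "\<dots> \<le> (\<Sum>l<n. (\<Sum>k<n. \<alpha> * M$$(k,l)) * \<bar>A2$$(l,j)\<bar>)"
    by (intro sum_mono mult_right_mono a Mnn) auto
  also have "\<dots> \<le> (\<Sum>l<n. (\<alpha> * F) * \<bar>A2$$(l,j)\<bar>)"
  proof (rule sum_mono)
    fix l assume l: "l \<in> {..<n}"
    have "(\<Sum>k<n. \<alpha> * M$$(k,l)) = \<alpha> * (\<Sum>k<n. M$$(k,l))" by (simp add: sum_distrib_left)
    also have "\<dots> \<le> \<alpha> * F" using f[of l] l pos by (intro mult_left_mono) auto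
    finally show "(\<Sum>k<n. \<alpha> * M$$(k,l)) * \<bar>A2$$(l,j)\<bar> \<le> (\<alpha> * F) * \<bar>A2$$(l,j)\<bar>"
      by (intro mult_right_mono) auto
  qed
  also have "\<dots> = (\<alpha> * F) * (\<Sum>l<n. \<bar>A2$$(l,j)\<bar>)" by (simp add: sum_distrib_left)
  also have "\<dots> \<le> \<alpha> * F * \<beta>"
    using b pos by (intro mult_left_mono) auto
  finally show ?thesis .
qed




lemma mok_mult': "m = a+b+dim_col P \<Longrightarrow> 0 \<le> \<epsilon> \<Longrightarrow> (\<And>i j k. \<bar>da i j k\<bar> \<le> \<epsilon>) \<Longrightarrow> (\<And>i j k. \<bar>ds i j k\<bar> \<le> \<epsilon>) \<Longrightarrow>
  mok \<epsilon> a Ph P SP \<Longrightarrow> mok \<epsilon> b Qh Q SQ \<Longrightarrow> dim_col P = dim_row Q \<Longrightarrow>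
  mok \<epsilon> m (fl_mult da ds Ph Qh) (P*Q) (SP*SQ)"
  using mok_mult by blast

lemma mok_had': "m = Suc (a+b) \<Longrightarrow> 0 \<le> \<epsilon> \<Longrightarrow> (\<And>i j. \<bar>d i j\<bar> \<le> \<epsilon>) \<Longrightarrow>
  mok \<epsilon> a Ph P SP \<Longrightarrow> mok \<epsilon> b Qh Q SQ \<Longrightarrow> dim_row P = dim_row Q \<Longrightarrow> dim_col P = dim_col Q \<Longrightarrow>
  mok \<epsilon> m (fl_hadamard d Ph Qh) (hadamard P Q) (hadamard SP SQ)"
  using mok_had by blast

lemma dims_tc:
  "tc_AT n_o n_h p \<in> carrier_mat n_o (tc_n n_o n_h)"
  "tc_G n_o n_h p \<in> carrier_mat (tc_n n_o n_h) n_h"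
  "tc_BT n_o n_h p \<in> carrier_mat (tc_n n_o n_h) (tc_n n_o n_h)"
  unfolding tc_AT_def tc_G_def tc_BT_def by auto

lemma main_mok:
  assumes e0: "0 \<le> \<epsilon>" and eb: "\<And>t i j k. \<bar>e t i j k\<bar> \<le> \<epsilon>"
    and H: "H \<in> carrier_mat n_h n_h" and X: "X \<in> carrier_mat (tc_n n_o n_h) (tc_n n_o n_h)"
  shows "mok \<epsilon> (2*n_h + 4*tc_n n_o n_h + 7) (tc_Shat n_o n_h p H X e) (tc_S n_o n_h p H X)
     (abs_mat (tc_AT n_o n_h p) *
        hadamard (abs_mat (tc_G n_o n_h p) * abs_mat H * abs_mat (transpose_mat (tc_G n_o n_h p)))
          (abs_mat (tc_BT n_o n_h p) * abs_mat X * abs_mat (transpose_mat (tc_BT n_o n_h p)))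
        * abs_mat (transpose_mat (tc_AT n_o n_h p)))"
proof -
  define n where "n = tc_n n_o n_h"
  define AT where "AT = tc_AT n_o n_h p"
  define G where "G = tc_G n_o n_h p"
  define BT where "BT = tc_BT n_o n_h p"
  have AT: "AT \<in> carrier_mat n_o n" and G: "G \<in> carrier_mat n n_h" and BT: "BT \<in> carrier_mat n n"
    using dims_tc unfolding AT_def G_def BT_def n_def by auto
  have X': "X \<in> carrier_mat n n" using X n_def by simp
  have st: "\<And>t. \<And>i j. \<bar>e t i j 0\<bar> \<le> \<epsilon>" using eb by blast
  have m1: "mok \<epsilon> (1+n_h) (fl_mult (e 2) (e 3) (fl_store (\<lambda>i j. e 0 i j 0) G) H) (G*H) (abs_mat G * abs_mat H)"
    by (rule mok_mult'[OF _ e0 eb eb mok_store[OF e0 st] mok_exact]) (use G H in auto)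
  have U: "mok \<epsilon> (2*n_h+2) (fl_mult (e 4) (e 5) (fl_mult (e 2) (e 3) (fl_store (\<lambda>i j. e 0 i j 0) G) H)
       (fl_store (\<lambda>i j. e 1 i j 0) (transpose_mat G))) (G*H*transpose_mat G) (abs_mat G * abs_mat H * abs_mat (transpose_mat G))"
    by (rule mok_mult'[OF _ e0 eb eb m1 mok_store[OF e0 st]]) (use G H in auto)
  have m2: "mok \<epsilon> (1+n) (fl_mult (e 8) (e 9) (fl_store (\<lambda>i j. e 6 i j 0) BT) X) (BT*X) (abs_mat BT * abs_mat X)"
    by (rule mok_mult'[OF _ e0 eb eb mok_store[OF e0 st] mok_exact]) (use BT X' in auto)
  have V: "mok \<epsilon> (2*n+2) (fl_mult (e 10) (e 11) (fl_mult (e 8) (e 9) (fl_store (\<lambda>i j. e 6 i j 0) BT) X)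
       (fl_store (\<lambda>i j. e 7 i j 0) (transpose_mat BT))) (BT*X*transpose_mat BT) (abs_mat BT * abs_mat X * abs_mat (transpose_mat BT))"
    by (rule mok_mult'[OF _ e0 eb eb m2 mok_store[OF e0 st]]) (use BT X' in auto)
  define Uh where "Uh = fl_mult (e 4) (e 5) (fl_mult (e 2) (e 3) (fl_store (\<lambda>i j. e 0 i j 0) G) H)
       (fl_store (\<lambda>i j. e 1 i j 0) (transpose_mat G))"
  define Vh where "Vh = fl_mult (e 10) (e 11) (fl_mult (e 8) (e 9) (fl_store (\<lambda>i j. e 6 i j 0) BT) X)
       (fl_store (\<lambda>i j. e 7 i j 0) (transpose_mat BT))"
  define Wh where "Wh = fl_hadamard (\<lambda>i j. e 12 i j 0) Uh Vh"
  define Th where "Th = fl_mult (e 15) (e 16) (fl_store (\<lambda>i j. e 13 i j 0) AT) Wh"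
  note U = U[folded Uh_def] and V = V[folded Vh_def]
  have W: "mok \<epsilon> (2*n_h+2*n+5) Wh (hadamard (G*H*transpose_mat G) (BT*X*transpose_mat BT))
      (hadamard (abs_mat G * abs_mat H * abs_mat (transpose_mat G)) (abs_mat BT * abs_mat X * abs_mat (transpose_mat BT)))"
    unfolding Wh_def by (rule mok_had'[OF _ e0 st U V]) (use G H BT X' in auto)
  have m3: "mok \<epsilon> (2*n_h+3*n+6) (fl_mult (e 15) (e 16) (fl_store (\<lambda>i j. e 13 i j 0) AT) Wh)
      (AT * hadamard (G*H*transpose_mat G) (BT*X*transpose_mat BT))
      (abs_mat AT * hadamard (abs_mat G * abs_mat H * abs_mat (transpose_mat G)) (abs_mat BT * abs_mat X * abs_mat (transpose_mat BT)))"
    by (rule mok_mult'[OF _ e0 eb eb mok_store[OF e0 st] W]) (use AT G H BT X' in \<open>auto simp: hadamard_def\<close>)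
  have F: "mok \<epsilon> (2*n_h+4*n+7) (fl_mult (e 17) (e 18) Th (fl_store (\<lambda>i j. e 14 i j 0) (transpose_mat AT)))
      (AT * hadamard (G*H*transpose_mat G) (BT*X*transpose_mat BT) * transpose_mat AT)
      (abs_mat AT * hadamard (abs_mat G * abs_mat H * abs_mat (transpose_mat G)) (abs_mat BT * abs_mat X * abs_mat (transpose_mat BT)) * abs_mat (transpose_mat AT))"
    unfolding Th_def by (rule mok_mult'[OF _ e0 eb eb m3 mok_store[OF e0 st]]) (use AT G H BT X' in \<open>auto simp: hadamard_def\<close>)
  show ?thesis using F unfolding tc_Shat_def tc_S_def Let_def Th_def Wh_def Uh_def Vh_def AT_def G_def BT_def n_def .
qed




lemma absprod_nonneg: fixes A B :: "real mat" shows "(\<And>i j. i < dim_row A \<Longrightarrow> j < dim_col A \<Longrightarrow> 0 \<le> A$$(i,j)) \<Longrightarrow>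
  (\<And>i j. i < dim_row B \<Longrightarrow> j < dim_col B \<Longrightarrow> 0 \<le> B$$(i,j)) \<Longrightarrow> dim_col A = dim_row B \<Longrightarrow>
  i < dim_row A \<Longrightarrow> j < dim_col B \<Longrightarrow> 0 \<le> (A*B)$$(i,j)"
proof -
  assume a: "\<And>i j. i < dim_row A \<Longrightarrow> j < dim_col A \<Longrightarrow> 0 \<le> A$$(i,j)"
    and b: "\<And>i j. i < dim_row B \<Longrightarrow> j < dim_col B \<Longrightarrow> 0 \<le> B$$(i,j)"
    and d: "dim_col A = dim_row B" and i: "i < dim_row A" and j: "j < dim_col B"
  have "(A*B)$$(i,j) = (\<Sum>k<dim_col A. A$$(i,k)*B$$(k,j))" by (rule mult_entry[OF i j d])
  also have "0 \<le> \<dots>"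
  proof (rule sum_nonneg)
    fix k assume "k \<in> {..<dim_col A}"
    thus "0 \<le> A$$(i,k)*B$$(k,j)" using a[OF i] b[OF _ j] d by (intro mult_nonneg_nonneg) auto
  qed
  finally show ?thesis .
qed

lemma abs_mat_nonneg: "i < dim_row A \<Longrightarrow> j < dim_col A \<Longrightarrow> 0 \<le> abs_mat A $$ (i,j)"
  unfolding abs_mat_def by simp

theorem mainTheorem4:
  fixes n_o n_h :: nat and p :: "nat \<Rightarrow> real" and H X :: "real mat"
  assumes "n_o \<ge> 1" and "n_h \<ge> 1"
    and "inj_on p {0..<tc_n n_o n_h}"
    and "H \<in> carrier_mat n_h n_h"
    and "X \<in> carrier_mat (tc_n n_o n_h) (tc_n n_o n_h)"
  shows "\<exists>C \<epsilon>0. \<epsilon>0 > 0 \<and>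
    (\<forall>\<epsilon> e. 0 \<le> \<epsilon> \<and> \<epsilon> \<le> \<epsilon>0 \<and> (\<forall>t i j k. \<bar>e t i j k\<bar> \<le> \<epsilon>) \<longrightarrow>
      (let n = tc_n n_o n_h; AT = tc_AT n_o n_h p; G = tc_G n_o n_h p; BT = tc_BT n_o n_h p;
           S = tc_S n_o n_h p H X; Shat = tc_Shat n_o n_h p H X e;
           c = real (2 * n_h + 4 * n + 7) * \<epsilon>
       in (\<forall>i<n_o. \<forall>j<n_o.
             \<bar>Shat $$ (i,j) - S $$ (i,j)\<bar> \<le>
               (abs_mat AT *
                 hadamard (abs_mat G * abs_mat H * abs_mat (transpose_mat G))
                          (abs_mat BT * abs_mat X * abs_mat (transpose_mat BT))
                 * abs_mat (transpose_mat AT)) $$ (i,j) * c + C * \<epsilon>\<^sup>2)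
          \<and> mat_norm1 (Shat - S) \<le>
              mat_norm1 AT * frob G * frob H * frob (transpose_mat G) * frob BT * frob X
                * frob (transpose_mat BT) * mat_norm1 (transpose_mat AT) * c + C * \<epsilon>\<^sup>2))"
proof -
  define n where "n = tc_n n_o n_h"
  define AT where "AT = tc_AT n_o n_h p"
  define G where "G = tc_G n_o n_h p"
  define BT where "BT = tc_BT n_o n_h p"
  define N where "N = 2 * n_h + 4 * n + 7"
  have n1: "n \<ge> 1" using assms(1,2) unfolding n_def tc_n_def by simp
  have AT: "AT \<in> carrier_mat n_o n" and G: "G \<in> carrier_mat n n_h" and BT: "BT \<in> carrier_mat n n"
    using dims_tc unfolding AT_def G_def BT_def n_def by auto
  have H: "H \<in> carrier_mat n_h n_h" and X: "X \<in> carrier_mat n n" using assms(4,5) n_def by auto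
  define P where "P = abs_mat G * abs_mat H * abs_mat (transpose_mat G)"
  define Q where "Q = abs_mat BT * abs_mat X * abs_mat (transpose_mat BT)"
  define M where "M = hadamard P Q"
  define D where "D = abs_mat AT * M * abs_mat (transpose_mat AT)"
  define Dsum where "Dsum = (\<Sum>i<n_o. \<Sum>j<n_o. D$$(i,j))"
  define C where "C = Dsum * 4^N"
  define K where "K = mat_norm1 AT * frob G * frob H * frob (transpose_mat G) * frob BT * frob X
                * frob (transpose_mat BT) * mat_norm1 (transpose_mat AT)"
  have P: "P \<in> carrier_mat n n" and Q: "Q \<in> carrier_mat n n" using G H BT X unfolding P_def Q_def abs_mat_def by auto
  have M: "M \<in> carrier_mat n n" using P Q unfolding M_def hadamard_def by auto
  have D: "D \<in> carrier_mat n_o n_o" using AT M unfolding D_def abs_mat_def by auto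
  have Pnn: "0 \<le> P$$(k,l)" if "k < n" "l < n" for k l
    unfolding P_def using G H that
    by (intro absprod_nonneg abs_mat_nonneg) (auto simp: abs_mat_def)
  have Qnn: "0 \<le> Q$$(k,l)" if "k < n" "l < n" for k l
    unfolding Q_def using BT X that
    by (intro absprod_nonneg abs_mat_nonneg) (auto simp: abs_mat_def)
  have Mentry: "M$$(k,l) = P$$(k,l) * Q$$(k,l)" if "k < n" "l < n" for k l
    unfolding M_def hadamard_def using P that by auto
  have Mnn: "0 \<le> M$$(k,l)" if "k < n" "l < n" for k l
    using Mentry[OF that] Pnn[OF that] Qnn[OF that] by simp
  define F where "F = frob G * frob H * frob (transpose_mat G) * frob BT * frob X * frob (transpose_mat BT)"
  have F0: "0 \<le> F" unfolding F_def by (intro mult_nonneg_nonneg frob_nonneg)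
  have fP: "frob P \<le> frob G * frob H * frob (transpose_mat G)"
  proof -
    have "frob P \<le> frob (abs_mat G * abs_mat H) * frob (abs_mat (transpose_mat G))"
      unfolding P_def by (rule frob_mult) (use G H in \<open>auto simp: abs_mat_def\<close>)
    also have "\<dots> \<le> (frob (abs_mat G) * frob (abs_mat H)) * frob (abs_mat (transpose_mat G))"
      by (intro mult_right_mono frob_mult frob_nonneg) (use G H in \<open>auto simp: abs_mat_def\<close>)
    finally show ?thesis by (simp add: frob_abs)
  qed
  have fQ: "frob Q \<le> frob BT * frob X * frob (transpose_mat BT)"
  proof -
    have "frob Q \<le> frob (abs_mat BT * abs_mat X) * frob (abs_mat (transpose_mat BT))"
      unfolding Q_def by (rule frob_mult) (use BT X in \<open>auto simp: abs_mat_def\<close>)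
    also have "\<dots> \<le> (frob (abs_mat BT) * frob (abs_mat X)) * frob (abs_mat (transpose_mat BT))"
      by (intro mult_right_mono frob_mult frob_nonneg) (use BT X in \<open>auto simp: abs_mat_def\<close>)
    finally show ?thesis by (simp add: frob_abs)
  qed
  have Fcol: "(\<Sum>k<n. M$$(k,l)) \<le> F" if l: "l < n" for l
  proof -
    have "(\<Sum>k<n. M$$(k,l)) = (\<Sum>k<dim_row P. P$$(k,l) * Q$$(k,l))"
      using P l Mentry by (intro sum.cong) auto
    also have "\<dots> \<le> frob P * frob Q" by (rule had_colsum) (use P Q l in auto)
    also have "\<dots> \<le> (frob G * frob H * frob (transpose_mat G)) * (frob BT * frob X * frob (transpose_mat BT))"
      by (intro mult_mono fP fQ frob_nonneg) (intro mult_nonneg_nonneg frob_nonneg)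
    finally show ?thesis unfolding F_def by (simp add: mult_ac)
  qed
  have normAT0: "0 \<le> mat_norm1 AT"
    using mat_norm1_ge[of 0 AT] AT n1 by (auto intro: order_trans[OF sum_nonneg])
  have colD: "(\<Sum>i<n_o. D$$(i,j)) \<le> K" if j: "j < n_o" for j
  proof -
    have "(\<Sum>i<n_o. D$$(i,j)) \<le> mat_norm1 AT * F * mat_norm1 (transpose_mat AT)"
      unfolding D_def
    proof (rule D_colsum[OF AT M _ Mnn _ Fcol _ normAT0 F0 j])
      show "transpose_mat AT \<in> carrier_mat n n_o" using AT by auto
      fix k assume "k < n" thus "(\<Sum>i<n_o. \<bar>AT$$(i,k)\<bar>) \<le> mat_norm1 AT"
        using mat_norm1_ge[of k AT] AT by auto
    next
      show "(\<Sum>l<n. \<bar>transpose_mat AT$$(l,j)\<bar>) \<le> mat_norm1 (transpose_mat AT)"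
        using mat_norm1_ge[of j "transpose_mat AT"] AT j by auto
    qed (auto)
    thus ?thesis unfolding K_def F_def by (simp add: mult_ac)
  qed
  have K0: "0 \<le> K" using colD[of 0] assms(1) D Mnn
  proof -
    have "0 \<le> (\<Sum>i<n_o. D$$(i,0))"
    proof (intro sum_nonneg)
      fix i assume "i \<in> {..<n_o}"
      thus "0 \<le> D$$(i,0)" unfolding D_def using AT M assms(1)
        by (intro absprod_nonneg abs_mat_nonneg) (auto simp: abs_mat_def intro!: absprod_nonneg Mnn)
    qed
    thus ?thesis using colD[of 0] assms(1) by simp
  qed
  have Dnn: "0 \<le> D$$(i,j)" if "i < n_o" "j < n_o" for i j
    unfolding D_def using AT M that
    by (intro absprod_nonneg abs_mat_nonneg) (auto simp: abs_mat_def intro!: absprod_nonneg Mnn)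
  have DleS: "D$$(i,j) \<le> Dsum" if ij: "i < n_o" "j < n_o" for i j
  proof -
    have "D$$(i,j) \<le> (\<Sum>j'<n_o. D$$(i,j'))"
      using member_le_sum[of j "{..<n_o}" "\<lambda>j'. D$$(i,j')"] ij Dnn by auto
    also have "\<dots> \<le> Dsum" unfolding Dsum_def
      using member_le_sum[of i "{..<n_o}" "\<lambda>i'. \<Sum>j'<n_o. D$$(i',j')"] ij Dnn by (auto intro!: sum_nonneg)
    finally show ?thesis .
  qed
  have colD2: "(\<Sum>i<n_o. D$$(i,j)) \<le> Dsum" if j: "j < n_o" for j
    unfolding Dsum_def using j Dnn by (subst sum.swap) (intro member_le_sum[of j "{..<n_o}" "\<lambda>j'. \<Sum>i<n_o. D$$(i,j')"]; auto intro!: sum_nonneg)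
  have Dsum0: "0 \<le> Dsum" unfolding Dsum_def using Dnn by (auto intro!: sum_nonneg)
  show ?thesis
    unfolding Let_def AT_def[symmetric] G_def[symmetric] BT_def[symmetric] n_def[symmetric]
      P_def[symmetric] Q_def[symmetric] M_def[symmetric] D_def[symmetric] K_def[symmetric] N_def[symmetric]
  proof (rule exI[of _ C], rule exI[of _ 1], intro conjI allI impI)
    fix \<epsilon> :: real and e :: "nat \<Rightarrow> nat \<Rightarrow> nat \<Rightarrow> nat \<Rightarrow> real"
    assume h: "0 \<le> \<epsilon> \<and> \<epsilon> \<le> 1 \<and> (\<forall>t i j k. \<bar>e t i j k\<bar> \<le> \<epsilon>)"
    hence e0: "0 \<le> \<epsilon>" and e1: "\<epsilon> \<le> 1" and eb: "\<And>t i j k. \<bar>e t i j k\<bar> \<le> \<epsilon>" by auto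
    define Sh where "Sh = tc_Shat n_o n_h p H X e"
    define S where "S = tc_S n_o n_h p H X"
    have mk: "mok \<epsilon> N Sh S D"
      unfolding D_def M_def P_def Q_def AT_def G_def BT_def N_def n_def Sh_def S_def
      using main_mok[OF e0 eb assms(4,5)] .
    have dS: "dim_row Sh = n_o" "dim_col Sh = n_o" "dim_row S = n_o" "dim_col S = n_o"
      using mk D unfolding mok_def by auto
    define c where "c = real N * \<epsilon>"
    have del: "(1+\<epsilon>)^N - 1 \<le> c + 4^N * \<epsilon>^2" unfolding c_def using pow_bound[OF e0 e1, of N] by simp
    have ent: "\<bar>Sh$$(i,j) - S$$(i,j)\<bar> \<le> D$$(i,j) * c + D$$(i,j) * 4^N * \<epsilon>^2" if ij: "i < n_o" "j < n_o" for i j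
    proof -
      have "ok \<epsilon> N (Sh$$(i,j)) (S$$(i,j)) (D$$(i,j))" using mk ij dS unfolding mok_def by auto
      hence "\<bar>Sh$$(i,j) - S$$(i,j)\<bar> \<le> D$$(i,j) * ((1+\<epsilon>)^N - 1)" unfolding ok_def by auto
      also have "\<dots> \<le> D$$(i,j) * (c + 4^N * \<epsilon>^2)" by (intro mult_left_mono del Dnn ij)
      finally show ?thesis by (simp add: algebra_simps)
    qed
    have C4: "0 \<le> 4^N * \<epsilon>^2" by simp
    show "\<bar>Sh$$(i,j) - S$$(i,j)\<bar> \<le> D$$(i,j) * (real N * \<epsilon>) + C * \<epsilon>^2"
      if ij: "i < n_o" "j < n_o" for i j
    proof -
      have "D$$(i,j) * 4^N * \<epsilon>^2 \<le> Dsum * 4^N * \<epsilon>^2"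
        using DleS[OF ij] C4 by (simp add: mult.assoc mult_right_mono)
      thus ?thesis
        using ent[OF ij] unfolding C_def c_def by linarith
    qed
    show "mat_norm1 (Sh - S) \<le> K * (real N * \<epsilon>) + C * \<epsilon>^2"
    proof (rule mat_norm1_le)
      have c0: "0 \<le> c" unfolding c_def using e0 by simp
      have "0 \<le> C * \<epsilon>^2" unfolding C_def using Dsum0 by simp
      thus "0 \<le> K * (real N * \<epsilon>) + C * \<epsilon>^2" using K0 c0 unfolding c_def by simp
      fix j assume j: "j < dim_col (Sh - S)"
      hence j': "j < n_o" using dS by simp
      have "(\<Sum>i<dim_row (Sh - S). \<bar>(Sh - S)$$(i,j)\<bar>) = (\<Sum>i<n_o. \<bar>Sh$$(i,j) - S$$(i,j)\<bar>)"
        using dS j' by (intro sum.cong) auto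
      also have "\<dots> \<le> (\<Sum>i<n_o. D$$(i,j) * c + D$$(i,j) * (4^N * \<epsilon>^2))"
        using ent j' by (intro sum_mono) (simp add: mult.assoc)
      also have "\<dots> = (\<Sum>i<n_o. D$$(i,j)) * c + (\<Sum>i<n_o. D$$(i,j)) * (4^N * \<epsilon>^2)"
        by (simp add: sum.distrib sum_distrib_right)
      also have "\<dots> \<le> K * c + Dsum * (4^N * \<epsilon>^2)"
        using colD[OF j'] colD2[OF j'] c0 C4 by (intro add_mono mult_right_mono) auto
      finally show "(\<Sum>i<dim_row (Sh - S). \<bar>(Sh - S)$$(i,j)\<bar>) \<le> K * (real N * \<epsilon>) + C * \<epsilon>^2"
        unfolding C_def c_def by (simp add: mult.assoc)
    qed
  qed simp
qed


end
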